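(* Let $n,m$ be positive integers, let $x\in\mathbb{R}^n$, $y\in\mathbb{R}^m$ and $Z=(z_{ij})\in\mathbb{R}^{n\times m}$. For $i\in[n]$, $j\in[m]$ put $P_{ij}:=(x_i,y_j,z_{ij})\in\mathbb{R}^3$, and define the convex sets \[ A_i:=\operatorname{conv}\{P_{ij}: j\in[m]\}\quad (i\in[n]),\qquad B_j:=\operatorname{conv}\{P_{ij}: i\in[n]\}\quad (j\in[m]). \] Then at least one of the following holds: (1) there is a real number $x_0$ and a line $l_x$ contained in the plane $\{(x_0,s,t): s,t\in\mathbb{R}\}$ that intersects every set $B_j$, $j\in[m]$; or (2) there is a real number $y_0$ and a line $l_y$ contained in the plane $\{(s,y_0,t): s,t\in\mathbb{R}\}$ that intersects every set $A_i$, $i\in[n]$.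
   Context: $[n]=\{1,\dots,n\}$. Each $A_i$ lies in the plane $\{x=x_i\}$, each $B_j$ lies in the plane $\{y=y_j\}$, and $P_{ij}\in A_i\cap B_j$. *)

theory Defs
  imports "HOL-Analysis.Analysis"
begin

definition line3 :: "(real \<times> real \<times> real) \<Rightarrow> (real \<times> real \<times> real) \<Rightarrow> (real \<times> real \<times> real) set" where
  "line3 p d = {p + t *\<^sub>R d | t. True}"

definition is_line3 :: "(real \<times> real \<times> real) set \<Rightarrow> bool" where
  "is_line3 L \<longleftrightarrow> (\<exists>p d. d \<noteq> 0 \<and> L = line3 p d)"

definition Pt :: "(nat \<Rightarrow> real) \<Rightarrow> (nat \<Rightarrow> real) \<Rightarrow> (nat \<Rightarrow> nat \<Rightarrow> real) \<Rightarrow> nat \<Rightarrow> nat \<Rightarrow> real \<times> real \<times> real" where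
  "Pt x y z i j = (x i, y j, z i j)"

end

theory Submission
  imports Defs
begin

definition cond1T :: "('i::finite \<Rightarrow> real) \<Rightarrow> ('j::finite \<Rightarrow> real) \<Rightarrow> ('i \<Rightarrow> 'j \<Rightarrow> real) \<Rightarrow> bool" where
  "cond1T x y z \<longleftrightarrow> (\<exists>x0 a c. \<forall>j. \<exists>l. (\<forall>i. 0 \<le> l i) \<and> sum l UNIV = 1 \<and>
      (\<Sum>i\<in>UNIV. l i * x i) = x0 \<and> (\<Sum>i\<in>UNIV. l i * z i j) = a + c * y j)"

lemma sep:
  fixes x :: "'i::finite \<Rightarrow> real" and y :: "'j::finite \<Rightarrow> real" and z :: "'i \<Rightarrow> 'j \<Rightarrow> real"
  assumes nc: "\<not> cond1T x y z"
  shows "\<exists>g::'j\<Rightarrow>real. sum g UNIV = 0 \<and> (\<Sum>j\<in>UNIV. g j * y j) = 0 \<and>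
     (\<forall>L::'j\<Rightarrow>'i\<Rightarrow>real. (\<forall>j i. 0 \<le> L j i) \<longrightarrow> (\<forall>j. sum (L j) UNIV = 1) \<longrightarrow>
        (\<forall>j j'. (\<Sum>i\<in>UNIV. L j i * x i) = (\<Sum>i\<in>UNIV. L j' i * x i)) \<longrightarrow>
        (\<Sum>j\<in>UNIV. g j * (\<Sum>i\<in>UNIV. L j i * z i j)) > 0)"
proof -
  define P :: "(real^('j \<times> 'i)) set" where "P = {Lm. (\<forall>k. 0 \<le> Lm$k) \<and> (\<forall>j. (\<Sum>i\<in>UNIV. Lm$(j,i)) = 1)
      \<and> (\<forall>j j'. (\<Sum>i\<in>UNIV. Lm$(j,i) * x i) = (\<Sum>i\<in>UNIV. Lm$(j',i) * x i))}"
  define \<phi> :: "real^('j \<times> 'i) \<Rightarrow> real^'j" where "\<phi> Lm = (\<chi> j. \<Sum>i\<in>UNIV. Lm$(j,i) * z i j)" for Lm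
  define K where "K = \<phi> ` P"
  define W :: "(real^'j) set" where "W = {v. \<exists>a c. v = (\<chi> j. a + c * y j)}"
  have linphi: "linear \<phi>"
    by (rule linearI) (simp_all add: \<phi>_def vec_eq_iff distrib_right sum.distrib sum_distrib_left mult.assoc)
  have convP: "convex P"
  proof (rule convexI)
    fix A B :: "real^('j \<times> 'i)" and u v :: real
    assume A: "A \<in> P" and B: "B \<in> P" and uv: "0 \<le> u" "0 \<le> v" "u + v = 1"
    have e1: "(\<Sum>i\<in>UNIV. (u *\<^sub>R A + v *\<^sub>R B)$(j,i) * x i) = u * (\<Sum>i\<in>UNIV. A$(j,i) * x i) + v * (\<Sum>i\<in>UNIV. B$(j,i) * x i)" for j
      by (simp add: distrib_right sum.distrib sum_distrib_left mult.assoc)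
    have e2: "(\<Sum>i\<in>UNIV. (u *\<^sub>R A + v *\<^sub>R B)$(j,i)) = u * (\<Sum>i\<in>UNIV. A$(j,i)) + v * (\<Sum>i\<in>UNIV. B$(j,i))" for j
      by (simp add: sum.distrib sum_distrib_left)
    show "u *\<^sub>R A + v *\<^sub>R B \<in> P"
      unfolding P_def mem_Collect_eq e1 e2
    proof (intro conjI allI)
      have A1: "\<forall>k. 0 \<le> A$k" "\<forall>j. (\<Sum>i\<in>UNIV. A$(j,i)) = 1"
        "\<forall>j j'. (\<Sum>i\<in>UNIV. A$(j,i) * x i) = (\<Sum>i\<in>UNIV. A$(j',i) * x i)"
        using A unfolding P_def by blast+
      have B1: "\<forall>k. 0 \<le> B$k" "\<forall>j. (\<Sum>i\<in>UNIV. B$(j,i)) = 1"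
        "\<forall>j j'. (\<Sum>i\<in>UNIV. B$(j,i) * x i) = (\<Sum>i\<in>UNIV. B$(j',i) * x i)"
        using B unfolding P_def by blast+
      fix k show "0 \<le> (u *\<^sub>R A + v *\<^sub>R B)$k" using A1(1) B1(1) uv by (cases k) (simp add: add_nonneg_nonneg)
    next
      fix j show "u * (\<Sum>i\<in>UNIV. A$(j,i)) + v * (\<Sum>i\<in>UNIV. B$(j,i)) = 1"
        using A B uv unfolding P_def by simp
    next
      fix j j'
      have "(\<Sum>i\<in>UNIV. A$(j,i) * x i) = (\<Sum>i\<in>UNIV. A$(j',i) * x i)"
        "(\<Sum>i\<in>UNIV. B$(j,i) * x i) = (\<Sum>i\<in>UNIV. B$(j',i) * x i)"
        using A B unfolding P_def by blast+
      then show "u * (\<Sum>i\<in>UNIV. A$(j,i) * x i) + v * (\<Sum>i\<in>UNIV. B$(j,i) * x i) =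
          u * (\<Sum>i\<in>UNIV. A$(j',i) * x i) + v * (\<Sum>i\<in>UNIV. B$(j',i) * x i)" by simp
    qed
  qed
  have closP: "closed P"
    unfolding P_def
    by (intro closed_Collect_conj closed_Collect_all closed_Collect_le closed_Collect_eq continuous_intros)
  have bndP: "bounded P"
  proof -
    have "norm Lm \<le> real CARD('j \<times> 'i)" if "Lm \<in> P" for Lm
    proof -
      have "\<bar>Lm$k\<bar> \<le> 1" for k
      proof -
        obtain j i where k: "k = (j,i)" by (cases k)
        have "Lm$(j,i) \<le> (\<Sum>i'\<in>UNIV. Lm$(j,i'))"
          by (rule member_le_sum) (use that in \<open>auto simp: P_def\<close>)
        then show ?thesis using that k by (auto simp: P_def)
      qed
      then have "(\<Sum>k\<in>UNIV. \<bar>Lm$k\<bar>) \<le> (\<Sum>k\<in>(UNIV::('j\<times>'i) set). 1)"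
        by (intro sum_mono) auto
      then show ?thesis using norm_le_l1_cart[of Lm] by simp
    qed
    then show ?thesis unfolding bounded_iff by blast
  qed
  have compK: "compact K"
    unfolding K_def
    by (rule compact_continuous_image[OF linear_continuous_on[OF linear_conv_bounded_linear[THEN iffD1, OF linphi]]])
       (use closP bndP in \<open>simp add: compact_eq_bounded_closed\<close>)
  have convK: "convex K" unfolding K_def by (rule convex_linear_image[OF linphi convP])
  define L0 :: "real^('j \<times> 'i)" where "L0 = (\<chi> k. if snd k = undefined then 1 else 0)"
  have "L0 \<in> P"
    unfolding P_def L0_def by (auto simp: if_distrib cong: if_cong)
  then have neK: "K \<noteq> {}" unfolding K_def by blast
  have subW: "subspace W"
  proof -
    have "(0::real^'j) = (\<chi> j. 0 + 0 * y j)" by (simp add: vec_eq_iff)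
    then have 0: "0 \<in> W" unfolding W_def by blast
    have 1: "v + w \<in> W" if vw: "v \<in> W" "w \<in> W" for v w
    proof -
      obtain a c a' c' where "v = (\<chi> j. a + c * y j)" "w = (\<chi> j. a' + c' * y j)"
        using vw unfolding W_def by blast
      then have "v + w = (\<chi> j. (a+a') + (c+c') * y j)" by (simp add: vec_eq_iff algebra_simps)
      then show ?thesis unfolding W_def by blast
    qed
    have 2: "t *\<^sub>R v \<in> W" if vw: "v \<in> W" for v t
    proof -
      obtain a c where "v = (\<chi> j. a + c * y j)"
        using vw unfolding W_def by blast
      then have "t *\<^sub>R v = (\<chi> j. (t*a) + (t*c) * y j)" by (simp add: vec_eq_iff algebra_simps)
      then show ?thesis unfolding W_def by blast
    qed
    show ?thesis unfolding subspace_def using 0 1 2 by blast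
  qed
  have disj: "K \<inter> W = {}"
  proof (rule ccontr)
    assume "K \<inter> W \<noteq> {}"
    then obtain Lm a c where Lm: "Lm \<in> P" and eq: "\<phi> Lm = (\<chi> j. a + c * y j)"
      unfolding K_def W_def by blast
    have "cond1T x y z"
      unfolding cond1T_def
    proof (rule exI[of _ "\<Sum>i\<in>UNIV. Lm$(undefined,i) * x i"], rule exI[of _ a], rule exI[of _ c], rule allI)
      fix j
      show "\<exists>l. (\<forall>i. 0 \<le> l i) \<and> sum l UNIV = 1 \<and> (\<Sum>i\<in>UNIV. l i * x i) = (\<Sum>i\<in>UNIV. Lm$(undefined,i) * x i)
         \<and> (\<Sum>i\<in>UNIV. l i * z i j) = a + c * y j"
      proof (intro exI[of _ "\<lambda>i. Lm$(j,i)"] conjI)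
        show "\<forall>i. 0 \<le> Lm$(j,i)" "(\<Sum>i\<in>UNIV. Lm$(j,i)) = 1"
          "(\<Sum>i\<in>UNIV. Lm$(j,i) * x i) = (\<Sum>i\<in>UNIV. Lm$(undefined,i) * x i)"
          using Lm unfolding P_def mem_Collect_eq by blast+
        show "(\<Sum>i\<in>UNIV. Lm$(j,i) * z i j) = a + c * y j"
          using arg_cong[OF eq, of "\<lambda>v. v$j"] unfolding \<phi>_def vec_lambda_beta .
      qed
    qed
    then show False using nc by blast
  qed
  obtain av b where sK: "\<forall>v\<in>K. inner av v < b" and sW: "\<forall>w\<in>W. inner av w > b"
    using separating_hyperplane_compact_closed[OF convK compK neK subspace_imp_convex[OF subW] closed_subspace[OF subW] disj]
    by blast
  have zero: "inner av w = 0" if "w \<in> W" for w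
  proof (rule ccontr)
    assume ne: "inner av w \<noteq> 0"
    have "b < 0" using sW subspace_0[OF subW] by force
    have "((b - 1) / inner av w) *\<^sub>R w \<in> W" using subspace_scale[OF subW that] .
    then have "b < inner av (((b - 1) / inner av w) *\<^sub>R w)" using sW by blast
    also have "\<dots> = b - 1" using ne by simp
    finally show False by simp
  qed
  have "b < 0" using sW subspace_0[OF subW] by force
  have w1: "(\<chi> j. 1 + 0 * y j) \<in> W" unfolding W_def by blast
  have w2: "(\<chi> j. 0 + 1 * y j) \<in> W" unfolding W_def by blast
  show ?thesis
  proof (intro exI[of _ "\<lambda>j. - av$j"] conjI allI impI)
    show "(\<Sum>j\<in>UNIV. - av $ j) = 0" using zero[OF w1] by (simp add: inner_vec_def sum_negf)
    show "(\<Sum>j\<in>UNIV. - av $ j * y j) = 0" using zero[OF w2] by (simp add: inner_vec_def sum_negf)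
  next
    fix L :: "'j\<Rightarrow>'i\<Rightarrow>real"
    assume h: "\<forall>j i. 0 \<le> L j i" "\<forall>j. sum (L j) UNIV = 1"
      "\<forall>j j'. (\<Sum>i\<in>UNIV. L j i * x i) = (\<Sum>i\<in>UNIV. L j' i * x i)"
    define Lm :: "real^('j \<times> 'i)" where "Lm = (\<chi> k. L (fst k) (snd k))"
    have LmP: "Lm \<in> P" unfolding P_def mem_Collect_eq
    proof (intro conjI allI)
      fix k show "0 \<le> Lm$k" using h(1) by (cases k) (simp add: Lm_def)
    next
      fix j show "(\<Sum>i\<in>UNIV. Lm$(j,i)) = 1" using h(2) by (simp add: Lm_def)
    next
      fix j j' show "(\<Sum>i\<in>UNIV. Lm$(j,i) * x i) = (\<Sum>i\<in>UNIV. Lm$(j',i) * x i)"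
        unfolding Lm_def vec_lambda_beta fst_conv snd_conv using h(3) by blast
    qed
    then have "Lm \<in> P" .
    then have "\<phi> Lm \<in> K" unfolding K_def by blast
    then have "inner av (\<phi> Lm) < 0" using sK \<open>b < 0\<close> by force
    then show "(\<Sum>j\<in>UNIV. - av $ j * (\<Sum>i\<in>UNIV. L j i * z i j)) > 0"
      by (simp add: inner_vec_def \<phi>_def Lm_def sum_negf)
  qed
qed

lemma combine:
  fixes x :: "'i::finite \<Rightarrow> real" and y :: "'j::finite \<Rightarrow> real" and z :: "'i \<Rightarrow> 'j \<Rightarrow> real"
    and g :: "'j \<Rightarrow> real" and h :: "'i \<Rightarrow> real"
  assumes g1: "sum g UNIV = 0" and g2: "(\<Sum>j\<in>UNIV. g j * y j) = 0"
    and g3: "\<forall>L::'j\<Rightarrow>'i\<Rightarrow>real. (\<forall>j i. 0 \<le> L j i) \<longrightarrow> (\<forall>j. sum (L j) UNIV = 1) \<longrightarrow>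
        (\<forall>j j'. (\<Sum>i\<in>UNIV. L j i * x i) = (\<Sum>i\<in>UNIV. L j' i * x i)) \<longrightarrow>
        (\<Sum>j\<in>UNIV. g j * (\<Sum>i\<in>UNIV. L j i * z i j)) > 0"
    and h1: "sum h UNIV = 0" and h2: "(\<Sum>i\<in>UNIV. h i * x i) = 0"
    and h3: "\<forall>M::'i\<Rightarrow>'j\<Rightarrow>real. (\<forall>i j. 0 \<le> M i j) \<longrightarrow> (\<forall>i. sum (M i) UNIV = 1) \<longrightarrow>
        (\<forall>i i'. (\<Sum>j\<in>UNIV. M i j * y j) = (\<Sum>j\<in>UNIV. M i' j * y j)) \<longrightarrow>
        (\<Sum>i\<in>UNIV. h i * (\<Sum>j\<in>UNIV. M i j * z i j)) > 0"
  shows False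
proof -
  define gp where "gp j = max (g j) 0" for j
  define gm where "gm j = max (- g j) 0" for j
  define hp where "hp i = max (h i) 0" for i
  define hm where "hm i = max (- h i) 0" for i
  have gpm: "g j = gp j - gm j" for j by (simp add: gp_def gm_def max_def)
  have hpm: "h i = hp i - hm i" for i by (simp add: hp_def hm_def max_def)
  define s where "s = sum gp UNIV"
  define t where "t = sum hp UNIV"
  have s2: "sum gm UNIV = s" using g1 unfolding s_def gpm by (simp add: sum_subtractf)
  have t2: "sum hm UNIV = t" using h1 unfolding t_def hpm by (simp add: sum_subtractf)
  have sy: "(\<Sum>j\<in>UNIV. gp j * y j) = (\<Sum>j\<in>UNIV. gm j * y j)"
    using g2 unfolding gpm by (simp add: left_diff_distrib sum_subtractf)
  have tx: "(\<Sum>i\<in>UNIV. hp i * x i) = (\<Sum>i\<in>UNIV. hm i * x i)"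
    using h2 unfolding hpm by (simp add: left_diff_distrib sum_subtractf)
  have gpn: "0 \<le> gp j" "0 \<le> gm j" for j by (auto simp: gp_def gm_def)
  have hpn: "0 \<le> hp i" "0 \<le> hm i" for i by (auto simp: hp_def hm_def)
  define i0 :: 'i where "i0 = undefined"
  define j0 :: 'j where "j0 = undefined"
  have "s > 0"
  proof (rule ccontr)
    assume "\<not> s > 0"
    then have "s = 0" using sum_nonneg[of UNIV gp] gpn unfolding s_def by force
    then have "gp j = 0" "gm j = 0" for j
      using sum_nonneg_eq_0_iff[of UNIV gp] sum_nonneg_eq_0_iff[of UNIV gm] gpn s2 unfolding s_def by auto
    then have "g j = 0" for j using gpm by simp
    moreover have "(\<Sum>j\<in>UNIV. g j * (\<Sum>i\<in>UNIV. (\<lambda>j i. if i = i0 then 1 else 0::real) j i * z i j)) > 0"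
      by (rule g3[rule_format]) auto
    ultimately show False by simp
  qed
  have "t > 0"
  proof (rule ccontr)
    assume "\<not> t > 0"
    then have "t = 0" using sum_nonneg[of UNIV hp] hpn unfolding t_def by force
    then have "hp i = 0" "hm i = 0" for i
      using sum_nonneg_eq_0_iff[of UNIV hp] sum_nonneg_eq_0_iff[of UNIV hm] hpn t2 unfolding t_def by auto
    then have "h i = 0" for i using hpm by simp
    moreover have "(\<Sum>i\<in>UNIV. h i * (\<Sum>j\<in>UNIV. (\<lambda>i j. if j = j0 then 1 else 0::real) i j * z i j)) > 0"
      by (rule h3[rule_format]) auto
    ultimately show False by simp
  qed
  define L where "L j i = (if g j \<ge> 0 then hm i else hp i) / t" for j i
  define M where "M i j = (if h i \<ge> 0 then gm j else gp j) / s" for i j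
  have "(\<Sum>j\<in>UNIV. g j * (\<Sum>i\<in>UNIV. L j i * z i j)) > 0"
  proof -
    have "\<forall>j i. 0 \<le> L j i" using hpn \<open>t > 0\<close> by (simp add: L_def)
    moreover have "sum (L j) UNIV = 1" for j
      using \<open>t > 0\<close> t2 by (cases "0 \<le> g j") (simp_all add: L_def t_def flip: sum_divide_distrib)
    moreover have "(\<Sum>i\<in>UNIV. L j i * x i) = (\<Sum>i\<in>UNIV. hp i * x i) / t" for j
      using tx by (cases "0 \<le> g j") (simp_all add: L_def flip: sum_divide_distrib)
    ultimately show ?thesis using g3 by simp
  qed
  moreover have "(\<Sum>i\<in>UNIV. h i * (\<Sum>j\<in>UNIV. M i j * z i j)) > 0"
  proof -
    have "\<forall>i j. 0 \<le> M i j" using gpn \<open>s > 0\<close> by (simp add: M_def)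
    moreover have "sum (M i) UNIV = 1" for i
      using \<open>s > 0\<close> s2 by (cases "0 \<le> h i") (simp_all add: M_def s_def flip: sum_divide_distrib)
    moreover have "(\<Sum>j\<in>UNIV. M i j * y j) = (\<Sum>j\<in>UNIV. gp j * y j) / s" for i
      using sy by (cases "0 \<le> h i") (simp_all add: M_def flip: sum_divide_distrib)
    ultimately show ?thesis using h3 by simp
  qed
  moreover have "t * (\<Sum>j\<in>UNIV. g j * (\<Sum>i\<in>UNIV. L j i * z i j))
      = (\<Sum>j\<in>UNIV. \<Sum>i\<in>UNIV. (gp j * hm i - gm j * hp i) * z i j)"
  proof -
    have e: "t * (g j * (L j i * z i j)) = (gp j * hm i - gm j * hp i) * z i j" for j i
      using \<open>t > 0\<close> by (auto simp: L_def gp_def gm_def max_def)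
    show ?thesis unfolding sum_distrib_left by (simp only: e)
  qed
  moreover have "s * (\<Sum>i\<in>UNIV. h i * (\<Sum>j\<in>UNIV. M i j * z i j))
      = (\<Sum>i\<in>UNIV. \<Sum>j\<in>UNIV. (hp i * gm j - hm i * gp j) * z i j)"
  proof -
    have e: "s * (h i * (M i j * z i j)) = (hp i * gm j - hm i * gp j) * z i j" for j i
      using \<open>s > 0\<close> by (auto simp: M_def hp_def hm_def max_def)
    show ?thesis unfolding sum_distrib_left by (simp only: e)
  qed
  moreover have "(\<Sum>j\<in>UNIV. \<Sum>i\<in>UNIV. (gp j * hm i - gm j * hp i) * z i j)
      + (\<Sum>i\<in>UNIV. \<Sum>j\<in>UNIV. (hp i * gm j - hm i * gp j) * z i j) = 0"
    by (subst sum.swap) (simp add: sum.distrib[symmetric] algebra_simps)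
  ultimately show False using \<open>s > 0\<close> \<open>t > 0\<close>
    by (smt (verit) mult_pos_pos)
qed

lemma core:
  fixes x :: "'i::finite \<Rightarrow> real" and y :: "'j::finite \<Rightarrow> real" and z :: "'i \<Rightarrow> 'j \<Rightarrow> real"
  shows "cond1T x y z \<or> cond1T y x (\<lambda>j i. z i j)"
proof (rule ccontr)
  assume "\<not> (cond1T x y z \<or> cond1T y x (\<lambda>j i. z i j))"
  then have n1: "\<not> cond1T x y z" and n2: "\<not> cond1T y x (\<lambda>j i. z i j)" by auto
  obtain g where g: "sum g UNIV = 0" "(\<Sum>j\<in>UNIV. g j * y j) = 0"
     "\<forall>L::'j\<Rightarrow>'i\<Rightarrow>real. (\<forall>j i. 0 \<le> L j i) \<longrightarrow> (\<forall>j. sum (L j) UNIV = 1) \<longrightarrow>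
        (\<forall>j j'. (\<Sum>i\<in>UNIV. L j i * x i) = (\<Sum>i\<in>UNIV. L j' i * x i)) \<longrightarrow>
        (\<Sum>j\<in>UNIV. g j * (\<Sum>i\<in>UNIV. L j i * z i j)) > 0"
    using sep[OF n1] by blast
  obtain h where h: "sum h UNIV = 0" "(\<Sum>i\<in>UNIV. h i * x i) = 0"
     "\<forall>M::'i\<Rightarrow>'j\<Rightarrow>real. (\<forall>i j. 0 \<le> M i j) \<longrightarrow> (\<forall>i. sum (M i) UNIV = 1) \<longrightarrow>
        (\<forall>i i'. (\<Sum>j\<in>UNIV. M i j * y j) = (\<Sum>j\<in>UNIV. M i' j * y j)) \<longrightarrow>
        (\<Sum>i\<in>UNIV. h i * (\<Sum>j\<in>UNIV. M i j * z i j)) > 0"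
    using sep[OF n2] by blast
  show False by (rule combine[OF g h])
qed

definition cond1 :: "(nat \<Rightarrow> real) \<Rightarrow> (nat \<Rightarrow> real) \<Rightarrow> (nat \<Rightarrow> nat \<Rightarrow> real) \<Rightarrow> nat set \<Rightarrow> nat set \<Rightarrow> bool" where
  "cond1 x y z I J \<longleftrightarrow> (\<exists>x0 a c. \<forall>j\<in>J. \<exists>l. (\<forall>i\<in>I. 0 \<le> l i) \<and> sum l I = 1 \<and>
      (\<Sum>i\<in>I. l i * x i) = x0 \<and> (\<Sum>i\<in>I. l i * z i j) = a + c * y j)"

lemma cond1_mono:
  assumes "finite I2" "I \<subseteq> I2" "cond1 x y z I J"
  shows "cond1 x y z I2 J"
proof -
  obtain x0 a c where H: "\<forall>j\<in>J. \<exists>l. (\<forall>i\<in>I. 0 \<le> l i) \<and> sum l I = 1 \<and>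
      (\<Sum>i\<in>I. l i * x i) = x0 \<and> (\<Sum>i\<in>I. l i * z i j) = a + c * y j"
    using assms(3) unfolding cond1_def by blast
  have "\<forall>j\<in>J. \<exists>l. (\<forall>i\<in>I2. 0 \<le> l i) \<and> sum l I2 = 1 \<and>
      (\<Sum>i\<in>I2. l i * x i) = x0 \<and> (\<Sum>i\<in>I2. l i * z i j) = a + c * y j"
  proof
    fix j assume "j \<in> J"
    then obtain l where l: "(\<forall>i\<in>I. 0 \<le> l i)" "sum l I = 1"
      "(\<Sum>i\<in>I. l i * x i) = x0" "(\<Sum>i\<in>I. l i * z i j) = a + c * y j"
      using H by blast
    define l2 where "l2 i = (if i \<in> I then l i else 0)" for i
    have II: "I2 \<inter> I = I" using assms(2) by blast
    have s: "(\<Sum>i\<in>I2. l2 i * f i) = (\<Sum>i\<in>I. l i * f i)" for f :: "nat \<Rightarrow> real"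
    proof -
      have "(\<Sum>i\<in>I2. l2 i * f i) = (\<Sum>i\<in>I2. if i \<in> I then l i * f i else 0)"
        by (rule sum.cong) (auto simp: l2_def)
      also have "\<dots> = (\<Sum>i\<in>I. l i * f i)"
        using sum.inter_restrict[OF assms(1), of "\<lambda>i. l i * f i" I] II by simp
      finally show ?thesis .
    qed
    have s1: "sum l2 I2 = sum l I" using s[of "\<lambda>_. 1"] by simp
    show "\<exists>l. (\<forall>i\<in>I2. 0 \<le> l i) \<and> sum l I2 = 1 \<and>
      (\<Sum>i\<in>I2. l i * x i) = x0 \<and> (\<Sum>i\<in>I2. l i * z i j) = a + c * y j"
      using l s[of x] s[of "\<lambda>i. z i j"] s1 by (intro exI[of _ l2]) (auto simp: l2_def)
  qed
  then show ?thesis unfolding cond1_def by blast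
qed

lemma transfer_lem:
  fixes e :: "'i::finite \<Rightarrow> nat" and f :: "'j::finite \<Rightarrow> nat"
  assumes "cond1T (x \<circ> e) (y \<circ> f) (\<lambda>a b. z (e a) (f b))"
  shows "cond1 x y z (range e) (range f)"
proof -
  obtain x0 a c where H: "\<forall>b. \<exists>l. (\<forall>i. 0 \<le> l i) \<and> sum l UNIV = 1 \<and>
      (\<Sum>i\<in>UNIV. l i * (x \<circ> e) i) = x0 \<and> (\<Sum>i\<in>UNIV. l i * z (e i) (f b)) = a + c * (y \<circ> f) b"
    using assms unfolding cond1T_def by blast
  have "\<forall>j\<in>range f. \<exists>l. (\<forall>i\<in>range e. 0 \<le> l i) \<and> sum l (range e) = 1 \<and>
      (\<Sum>i\<in>range e. l i * x i) = x0 \<and> (\<Sum>i\<in>range e. l i * z i j) = a + c * y j"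
  proof
    fix j assume "j \<in> range f"
    then obtain b where j: "j = f b" by blast
    obtain l where l: "\<forall>i. 0 \<le> l i" "sum l UNIV = 1"
      "(\<Sum>i\<in>UNIV. l i * (x \<circ> e) i) = x0" "(\<Sum>i\<in>UNIV. l i * z (e i) (f b)) = a + c * (y \<circ> f) b"
      using H by blast
    define l2 where "l2 k = sum l {i. e i = k}" for k
    have s: "(\<Sum>k\<in>range e. l2 k * F k) = (\<Sum>i\<in>UNIV. l i * F (e i))" for F :: "nat \<Rightarrow> real"
    proof -
      have "(\<Sum>i\<in>UNIV. l i * F (e i)) = (\<Sum>k\<in>range e. \<Sum>i\<in>{i \<in> UNIV. e i = k}. l i * F (e i))"
        by (rule sum.image_gen) simp
      also have "\<dots> = (\<Sum>k\<in>range e. l2 k * F k)"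
        unfolding l2_def sum_distrib_right by (intro sum.cong refl) auto
      finally show ?thesis by simp
    qed
    show "\<exists>l. (\<forall>i\<in>range e. 0 \<le> l i) \<and> sum l (range e) = 1 \<and>
      (\<Sum>i\<in>range e. l i * x i) = x0 \<and> (\<Sum>i\<in>range e. l i * z i j) = a + c * y j"
    proof (intro exI[of _ l2] conjI)
      show "\<forall>i\<in>range e. 0 \<le> l2 i" using l(1) by (simp add: l2_def sum_nonneg)
      show "sum l2 (range e) = 1" using s[of "\<lambda>_. 1"] l(2) by simp
      show "(\<Sum>i\<in>range e. l2 i * x i) = x0" using s[of x] l(3) by simp
      show "(\<Sum>i\<in>range e. l2 i * z i j) = a + c * y j" using s[of "\<lambda>k. z k j"] l(4) j by simp
    qed
  qed
  then show ?thesis unfolding cond1_def by blast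
qed

lemma surj_exists:
  assumes "finite A" "A \<noteq> {}" "card A \<le> CARD('a::finite)"
  shows "\<exists>e::'a \<Rightarrow> nat. range e = A"
proof -
  obtain f :: "nat \<Rightarrow> 'a" where f: "f ` A \<subseteq> UNIV" "inj_on f A"
    using card_le_inj[of A "UNIV::'a set"] assms by auto
  obtain a0 where a0: "a0 \<in> A" using assms(2) by blast
  define e where "e k = (if k \<in> f ` A then the_inv_into A f k else a0)" for k
  have "range e = A"
  proof
    show "range e \<subseteq> A" using a0 the_inv_into_into[OF f(2)] by (auto simp: e_def)
    show "A \<subseteq> range e"
    proof
      fix a assume "a \<in> A"
      then have "e (f a) = a" using the_inv_into_f_f[OF f(2)] by (simp add: e_def)
      then show "a \<in> range e" by (metis rangeI)
    qed
  qed
  then show ?thesis by blast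
qed

lemma helly_red:
  assumes fI: "finite I" and fJ: "finite J"
    and H: "\<forall>J'. J' \<subseteq> J \<longrightarrow> J' \<noteq> {} \<longrightarrow> card J' \<le> 4 \<longrightarrow> cond1 x y z I J'"
  shows "cond1 x y z I J"
proof -
  define C where "C j = {p::real\<times>real\<times>real. \<exists>l. (\<forall>i\<in>I. 0 \<le> l i) \<and> sum l I = 1 \<and>
     (\<Sum>i\<in>I. l i * x i) = fst p \<and> (\<Sum>i\<in>I. l i * z i j) = fst (snd p) + snd (snd p) * y j}" for j
  have eqv: "cond1 x y z I J' \<longleftrightarrow> \<Inter>(C ` J') \<noteq> {}" for J'
  proof
    assume "cond1 x y z I J'"
    then obtain x0 a c where "\<forall>j\<in>J'. \<exists>l. (\<forall>i\<in>I. 0 \<le> l i) \<and> sum l I = 1 \<and>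
      (\<Sum>i\<in>I. l i * x i) = x0 \<and> (\<Sum>i\<in>I. l i * z i j) = a + c * y j" unfolding cond1_def by blast
    then have "(x0, a, c) \<in> \<Inter>(C ` J')" unfolding C_def by simp
    then show "\<Inter>(C ` J') \<noteq> {}" by blast
  next
    assume "\<Inter>(C ` J') \<noteq> {}"
    then obtain x0 a c where "(x0, a, c) \<in> \<Inter>(C ` J')" by auto
    then have "\<forall>j\<in>J'. \<exists>l. (\<forall>i\<in>I. 0 \<le> l i) \<and> sum l I = 1 \<and>
      (\<Sum>i\<in>I. l i * x i) = x0 \<and> (\<Sum>i\<in>I. l i * z i j) = a + c * y j" unfolding C_def by simp
    then show "cond1 x y z I J'" unfolding cond1_def by blast
  qed
  have convC: "convex (C j)" for j
  proof (rule convexI)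
    fix p q :: "real\<times>real\<times>real" and u v :: real
    assume p: "p \<in> C j" and q: "q \<in> C j" and uv: "0 \<le> u" "0 \<le> v" "u + v = 1"
    obtain l1 where l1: "\<forall>i\<in>I. 0 \<le> l1 i" "sum l1 I = 1" "(\<Sum>i\<in>I. l1 i * x i) = fst p"
      "(\<Sum>i\<in>I. l1 i * z i j) = fst (snd p) + snd (snd p) * y j" using p unfolding C_def by blast
    obtain l2 where l2: "\<forall>i\<in>I. 0 \<le> l2 i" "sum l2 I = 1" "(\<Sum>i\<in>I. l2 i * x i) = fst q"
      "(\<Sum>i\<in>I. l2 i * z i j) = fst (snd q) + snd (snd q) * y j" using q unfolding C_def by blast
    have s: "(\<Sum>i\<in>I. (u * l1 i + v * l2 i) * f i) = u * (\<Sum>i\<in>I. l1 i * f i) + v * (\<Sum>i\<in>I. l2 i * f i)" for f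
      by (simp add: distrib_right sum.distrib sum_distrib_left mult.assoc)
    show "u *\<^sub>R p + v *\<^sub>R q \<in> C j"
      unfolding C_def mem_Collect_eq
    proof (intro exI[of _ "\<lambda>i. u * l1 i + v * l2 i"] conjI)
      show "\<forall>i\<in>I. 0 \<le> u * l1 i + v * l2 i" using l1(1) l2(1) uv by simp
      show "(\<Sum>i\<in>I. u * l1 i + v * l2 i) = 1" using s[of "\<lambda>_. 1"] l1(2) l2(2) uv by simp
      show "(\<Sum>i\<in>I. (u * l1 i + v * l2 i) * x i) = fst (u *\<^sub>R p + v *\<^sub>R q)"
        using s[of x] l1(3) l2(3) by simp
      show "(\<Sum>i\<in>I. (u * l1 i + v * l2 i) * z i j) = fst (snd (u *\<^sub>R p + v *\<^sub>R q)) + snd (snd (u *\<^sub>R p + v *\<^sub>R q)) * y j"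
        using s[of "\<lambda>i. z i j"] l1(4) l2(4) by (simp add: algebra_simps)
    qed
  qed
  have small: "\<Inter>t \<noteq> {}" if t: "t \<subseteq> C ` J" "t \<noteq> {}" "card t \<le> 4" for t
  proof -
    define J' where "J' = (\<lambda>S. SOME j. j \<in> J \<and> C j = S) ` t"
    have pick: "(SOME j. j \<in> J \<and> C j = S) \<in> J \<and> C (SOME j. j \<in> J \<and> C j = S) = S" if "S \<in> t" for S
      by (rule someI_ex) (use that t(1) in blast)
    have "J' \<subseteq> J" using pick unfolding J'_def by blast
    moreover have "C ` J' = t"
    proof -
      have "C ` J' = (\<lambda>S. C (SOME j. j \<in> J \<and> C j = S)) ` t" unfolding J'_def image_image ..
      also have "\<dots> = (\<lambda>S. S) ` t" by (rule image_cong) (use pick in blast)+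
      finally show ?thesis by simp
    qed
    moreover have "J' \<noteq> {}" using t(2) unfolding J'_def by blast
    moreover have "card J' \<le> 4"
    proof -
      have "finite t" using t(1) fJ by (meson finite_imageI finite_subset)
      then have "card J' \<le> card t" unfolding J'_def by (rule card_image_le)
      then show ?thesis using t(3) by simp
    qed
    ultimately have "cond1 x y z I J'" using H by blast
    then have "\<Inter>(C ` J') \<noteq> {}" using eqv by blast
    then show ?thesis using \<open>C ` J' = t\<close> by simp
  qed
  show ?thesis
  proof (cases "J = {}")
    case True then show ?thesis using eqv by simp
  next
    case False
    show ?thesis
    proof (cases "card (C ` J) \<ge> 4")
      case True
      have "\<Inter>(C ` J) \<noteq> {}"
      proof (rule Helly)
        show "DIM(real\<times>real\<times>real) + 1 \<le> card (C ` J)" using True by simp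
        show "\<forall>s\<in>C ` J. convex s" using convC by blast
        show "\<Inter>t \<noteq> {}" if "t \<subseteq> C ` J" "card t = DIM(real\<times>real\<times>real) + 1" for t
          using small[of t] that by fastforce
      qed
      then show ?thesis using eqv by blast
    next
      case False
      then have "\<Inter>(C ` J) \<noteq> {}" using small[of "C ` J"] \<open>J \<noteq> {}\<close> by simp
      then show ?thesis using eqv by blast
    qed
  qed
qed

lemma main_nat:
  assumes fI: "finite I" and fJ: "finite J"
  shows "cond1 x y z I J \<or> cond1 y x (\<lambda>j i. z i j) J I"
proof (rule ccontr)
  assume "\<not> (cond1 x y z I J \<or> cond1 y x (\<lambda>j i. z i j) J I)"
  then have n1: "\<not> cond1 x y z I J" and n2: "\<not> cond1 y x (\<lambda>j i. z i j) J I" by auto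
  obtain J' where J': "J' \<subseteq> J" "J' \<noteq> {}" "card J' \<le> 4" "\<not> cond1 x y z I J'"
    using helly_red[OF fI fJ, of x y z] n1 by blast
  have fJ': "finite J'" using J'(1) fJ finite_subset by blast
  have n2': "\<not> cond1 y x (\<lambda>j i. z i j) J' I"
    using cond1_mono[OF fJ J'(1)] n2 by blast
  obtain I' where I': "I' \<subseteq> I" "I' \<noteq> {}" "card I' \<le> 4" "\<not> cond1 y x (\<lambda>j i. z i j) J' I'"
    using helly_red[OF fJ' fI, of y x "\<lambda>j i. z i j"] n2' by blast
  have fI': "finite I'" using I'(1) fI finite_subset by blast
  have n1': "\<not> cond1 x y z I' J'"
    using cond1_mono[OF fI I'(1)] J'(4) by blast
  obtain e :: "4 \<Rightarrow> nat" where e: "range e = I'" using surj_exists[OF fI' I'(2), where 'a=4] I'(3) by auto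
  obtain f :: "4 \<Rightarrow> nat" where f: "range f = J'" using surj_exists[OF fJ' J'(2), where 'a=4] J'(3) by auto
  from core[of "x \<circ> e" "y \<circ> f" "\<lambda>a b. z (e a) (f b)"]
  show False
  proof
    assume "cond1T (x \<circ> e) (y \<circ> f) (\<lambda>a b. z (e a) (f b))"
    then have "cond1 x y z (range e) (range f)" by (rule transfer_lem)
    then show False using n1' e f by simp
  next
    assume "cond1T (y \<circ> f) (x \<circ> e) (\<lambda>b a. z (e a) (f b))"
    then have "cond1 y x (\<lambda>j i. z i j) (range f) (range e)"
      using transfer_lem[of y f x e "\<lambda>j i. z i j"] by simp
    then show False using I'(4) e f by simp
  qed
qed

theorem theorem1:
  fixes n m :: nat and x y :: "nat \<Rightarrow> real" and z :: "nat \<Rightarrow> nat \<Rightarrow> real"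
  assumes "n \<ge> 1" and "m \<ge> 1"
  shows "(\<exists>x0 lx. is_line3 lx \<and> lx \<subseteq> {(x0, s, t) | s t. True} \<and>
            (\<forall>j\<in>{1..m}. lx \<inter> convex hull {Pt x y z i j | i. i \<in> {1..n}} \<noteq> {}))
       \<or> (\<exists>y0 ly. is_line3 ly \<and> ly \<subseteq> {(s, y0, t) | s t. True} \<and>
            (\<forall>i\<in>{1..n}. ly \<inter> convex hull {Pt x y z i j | j. j \<in> {1..m}} \<noteq> {}))"
proof -
  have "cond1 x y z {1..n} {1..m} \<or> cond1 y x (\<lambda>j i. z i j) {1..m} {1..n}"
    using main_nat[of "{1..n}" "{1..m}" x y z] by simp
  then show ?thesis
proof (elim disjE)
  assume "cond1 x y z {1..n} {1..m}"
  then obtain x0 a c where H: "\<forall>j\<in>{1..m}. \<exists>l. (\<forall>i\<in>{1..n}. 0 \<le> l i) \<and> sum l {1..n} = 1 \<and>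
      (\<Sum>i\<in>{1..n}. l i * x i) = x0 \<and> (\<Sum>i\<in>{1..n}. l i * z i j) = a + c * y j"
    unfolding cond1_def by blast
  define lx where "lx = line3 (x0, 0, a) (0, 1, c)"
  have A: "is_line3 lx" unfolding lx_def is_line3_def by (rule exI[of _ "(x0, 0, a)"], rule exI[of _ "(0, 1, c)"]) (simp add: zero_prod_def)
  have B: "lx \<subseteq> {(x0, s, t) | s t. True}"
  proof
    fix w assume "w \<in> lx"
    then obtain t where "w = (x0, 0, a) + t *\<^sub>R (0, 1, c)" unfolding lx_def line3_def by blast
    then have "w = (x0, t, a + t * c)" by simp
    then show "w \<in> {(x0, s, t) | s t. True}" by blast
  qed
  have Cc: "lx \<inter> convex hull {Pt x y z i j | i. i \<in> {1..n}} \<noteq> {}" if j: "j \<in> {1..m}" for j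
  proof -
    obtain l where l: "\<forall>i\<in>{1..n}. 0 \<le> l i" "sum l {1..n} = 1"
      "(\<Sum>i\<in>{1..n}. l i * x i) = x0" "(\<Sum>i\<in>{1..n}. l i * z i j) = a + c * y j" using H j by blast
    have "(\<Sum>i\<in>{1..n}. l i *\<^sub>R Pt x y z i j) \<in> convex hull {Pt x y z i j | i. i \<in> {1..n}}"
    proof (rule convex_sum)
      show "finite {1..n}" by simp
      show "convex (convex hull {Pt x y z i j | i. i \<in> {1..n}})" by (rule convex_convex_hull)
      show "(\<Sum>i\<in>{1..n}. l i) = 1" by (rule l(2))
      show "0 \<le> l i" if "i \<in> {1..n}" for i using l(1) that by blast
      show "Pt x y z i j \<in> convex hull {Pt x y z i j | i. i \<in> {1..n}}" if "i \<in> {1..n}" for i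
        by (rule hull_inc) (use that in blast)
    qed
    moreover have "(\<Sum>i\<in>{1..n}. l i *\<^sub>R Pt x y z i j) = (x0, y j, a + c * y j)"
    proof -
      let ?S = "(\<Sum>i\<in>{1..n}. l i *\<^sub>R Pt x y z i j)"
      have "fst ?S = (\<Sum>i\<in>{1..n}. l i * x i)" by (simp add: fst_sum Pt_def)
      moreover have "fst (snd ?S) = (\<Sum>i\<in>{1..n}. l i * y j)" by (simp add: fst_sum snd_sum Pt_def)
      moreover have "(\<Sum>i\<in>{1..n}. l i * y j) = y j" using l(2) by (simp flip: sum_distrib_right)
      moreover have "snd (snd ?S) = (\<Sum>i\<in>{1..n}. l i * z i j)" by (simp add: snd_sum Pt_def)
      ultimately show ?thesis using l(3,4) by (simp add: prod_eq_iff)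
    qed
    moreover have "(x0, y j, a + c * y j) \<in> lx"
      unfolding lx_def line3_def mem_Collect_eq by (rule exI[of _ "y j"]) (simp add: algebra_simps)
    ultimately have "(x0, y j, a + c * y j) \<in> lx \<inter> convex hull {Pt x y z i j | i. i \<in> {1..n}}"
      by simp
    then show ?thesis by (rule ex_in_conv[THEN iffD1, OF exI])
  qed
  show ?thesis
  proof (rule disjI1, rule exI[of _ x0], rule exI[of _ lx], intro conjI ballI)
    show "is_line3 lx" by (rule A)
    show "lx \<subseteq> {(x0, s, t) | s t. True}" by (rule B)
    show "lx \<inter> convex hull {Pt x y z i j | i. i \<in> {1..n}} \<noteq> {}" if "j \<in> {1..m}" for j
      using Cc[OF that] .
  qed
next
  assume "cond1 y x (\<lambda>j i. z i j) {1..m} {1..n}"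
  then obtain y0 b d where H: "\<forall>i\<in>{1..n}. \<exists>l. (\<forall>j\<in>{1..m}. 0 \<le> l j) \<and> sum l {1..m} = 1 \<and>
      (\<Sum>j\<in>{1..m}. l j * y j) = y0 \<and> (\<Sum>j\<in>{1..m}. l j * z i j) = b + d * x i"
    unfolding cond1_def by blast
  define ly where "ly = line3 (0, y0, b) (1, 0, d)"
  have A: "is_line3 ly" unfolding ly_def is_line3_def by (rule exI[of _ "(0, y0, b)"], rule exI[of _ "(1, 0, d)"]) (simp add: zero_prod_def)
  have B: "ly \<subseteq> {(s, y0, t) | s t. True}"
  proof
    fix w assume "w \<in> ly"
    then obtain t where "w = (0, y0, b) + t *\<^sub>R (1, 0, d)" unfolding ly_def line3_def by blast
    then have "w = (t, y0, b + t * d)" by simp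
    then show "w \<in> {(s, y0, t) | s t. True}" by blast
  qed
  have Cc: "ly \<inter> convex hull {Pt x y z i j | j. j \<in> {1..m}} \<noteq> {}" if i: "i \<in> {1..n}" for i
  proof -
    obtain l where l: "\<forall>j\<in>{1..m}. 0 \<le> l j" "sum l {1..m} = 1"
      "(\<Sum>j\<in>{1..m}. l j * y j) = y0" "(\<Sum>j\<in>{1..m}. l j * z i j) = b + d * x i" using H i by blast
    have "(\<Sum>j\<in>{1..m}. l j *\<^sub>R Pt x y z i j) \<in> convex hull {Pt x y z i j | j. j \<in> {1..m}}"
    proof (rule convex_sum)
      show "finite {1..m}" by simp
      show "convex (convex hull {Pt x y z i j | j. j \<in> {1..m}})" by (rule convex_convex_hull)
      show "(\<Sum>j\<in>{1..m}. l j) = 1" by (rule l(2))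
      show "0 \<le> l j" if "j \<in> {1..m}" for j using l(1) that by blast
      show "Pt x y z i j \<in> convex hull {Pt x y z i j | j. j \<in> {1..m}}" if "j \<in> {1..m}" for j
        by (rule hull_inc) (use that in blast)
    qed
    moreover have "(\<Sum>j\<in>{1..m}. l j *\<^sub>R Pt x y z i j) = (x i, y0, b + d * x i)"
    proof -
      let ?S = "(\<Sum>j\<in>{1..m}. l j *\<^sub>R Pt x y z i j)"
      have "fst ?S = (\<Sum>j\<in>{1..m}. l j * x i)" by (simp add: fst_sum Pt_def)
      moreover have "(\<Sum>j\<in>{1..m}. l j * x i) = x i" using l(2) by (simp flip: sum_distrib_right)
      moreover have "fst (snd ?S) = (\<Sum>j\<in>{1..m}. l j * y j)" by (simp add: fst_sum snd_sum Pt_def)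
      moreover have "snd (snd ?S) = (\<Sum>j\<in>{1..m}. l j * z i j)" by (simp add: snd_sum Pt_def)
      ultimately show ?thesis using l(3,4) by (simp add: prod_eq_iff)
    qed
    moreover have "(x i, y0, b + d * x i) \<in> ly"
      unfolding ly_def line3_def mem_Collect_eq by (rule exI[of _ "x i"]) (simp add: algebra_simps)
    ultimately have "(x i, y0, b + d * x i) \<in> ly \<inter> convex hull {Pt x y z i j | j. j \<in> {1..m}}"
      by simp
    then show ?thesis by (rule ex_in_conv[THEN iffD1, OF exI])
  qed
  show ?thesis
  proof (rule disjI2, rule exI[of _ y0], rule exI[of _ ly], intro conjI ballI)
    show "is_line3 ly" by (rule A)
    show "ly \<subseteq> {(s, y0, t) | s t. True}" by (rule B)
    show "ly \<inter> convex hull {Pt x y z i j | j. j \<in> {1..m}} \<noteq> {}" if "i \<in> {1..n}" for i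
      using Cc[OF that] .
  qed
qed
qed

end
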